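(* Let $K \subset \mathbb{C}$ be a convex domain, let $n \geq 1$ and $m \geq 1$ be integers, and let $p:\mathbb{C} \rightarrow \mathbb{C}$ be a polynomial of degree $n+m$ whose roots (listed with multiplicity) are $a_1, \dots, a_{n+m}$, where $a_1, \dots, a_n \in K$ and $a_{n+1}, \dots, a_{n+m}$ lie outside $K$. Suppose that $$ \min_{n+1 \leq i \leq n+m}{ d(a_i, K)} \geq 2\,\mathrm{diam}(K) \sqrt{\frac{m^2}{n^2} + \frac{m}{n}}.$$ Then $p'$ has $n-1$ roots $z$ (counted with multiplicity) satisfying $$ d(z,K) \leq \frac{\mathrm{diam}(K) \sqrt{m}}{\sqrt{m+n}},$$ and its $m$ other roots $z$ satisfy $d(z,K) \geq \mathrm{diam}(K) \sqrt{m/(n+m)}$.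
   Context: For $z \in \mathbb{C}$ and a set $K \subset \mathbb{C}$, $d(z,K) = \inf_{w \in K}|z-w|$ denotes the distance from $z$ to $K$, and $\mathrm{diam}(K) = \sup_{w_1,w_2 \in K}|w_1-w_2|$ is the diameter of $K$. Roots are counted with multiplicity. *)

theory Defs
  imports "HOL-Analysis.Analysis" "HOL-Computational_Algebra.Polynomial"
begin

end

theory Submission
  imports Defs "HOL-Complex_Analysis.Complex_Analysis" "HOL-Computational_Algebra.Fundamental_Theorem_Algebra"
begin


lemma wn_mult:
  assumes pA: "path A" and pB: "path B" and cA: "pathfinish A = pathstart A"
    and cB: "pathfinish B = pathstart B"
    and nA: "0 \<notin> path_image A" and nB: "0 \<notin> path_image B"
  shows "winding_number (\<lambda>t. A t * B t) 0 = winding_number A 0 + winding_number B 0"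
proof -
  obtain qA where qA: "path qA" "pathfinish qA - pathstart qA = 2 * of_real pi * \<i> * winding_number A 0"
    "\<And>t. t \<in> {0..1} \<Longrightarrow> A t = 0 + exp (qA t)"
    using winding_number_as_continuous_log[OF pA nA] by blast
  obtain qB where qB: "path qB" "pathfinish qB - pathstart qB = 2 * of_real pi * \<i> * winding_number B 0"
    "\<And>t. t \<in> {0..1} \<Longrightarrow> B t = 0 + exp (qB t)"
    using winding_number_as_continuous_log[OF pB nB] by blast
  have pq: "path (\<lambda>t. qA t + qB t)"
    using qA(1) qB(1) unfolding path_def by (intro continuous_intros)
  have "winding_number (\<lambda>t. A t * B t) 0 = winding_number (exp \<circ> (\<lambda>t. qA t + qB t)) 0"
    by (rule winding_number_cong) (simp add: qA(3) qB(3) exp_add)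
  also have "\<dots> = ((qA 1 + qB 1) - (qA 0 + qB 0)) / (2 * of_real pi * \<i>)"
    using winding_number_compose_exp[OF pq] by (simp add: pathfinish_def pathstart_def)
  also have "\<dots> = (pathfinish qA - pathstart qA) / (2 * of_real pi * \<i>) + (pathfinish qB - pathstart qB) / (2 * of_real pi * \<i>)"
    by (simp add: pathfinish_def pathstart_def add_divide_distrib[symmetric])
  also have "\<dots> = winding_number A 0 + winding_number B 0"
    using qA(2) qB(2) by simp
  finally show ?thesis .
qed

lemma wn_prod_mset:
  fixes \<gamma> :: "real \<Rightarrow> complex"
  assumes p: "path \<gamma>" and c: "pathfinish \<gamma> = pathstart \<gamma>" and "c \<noteq> 0"
  shows "(\<forall>k\<in>#R. k \<notin> path_image \<gamma>) \<Longrightarrow>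
     path (\<lambda>t. c * (\<Prod>k\<in>#R. \<gamma> t - k)) \<and>
     0 \<notin> path_image (\<lambda>t. c * (\<Prod>k\<in>#R. \<gamma> t - k)) \<and>
     winding_number (\<lambda>t. c * (\<Prod>k\<in>#R. \<gamma> t - k)) 0 = (\<Sum>k\<in>#R. winding_number \<gamma> k)"
proof (induction R)
  case empty
  show ?case using \<open>c \<noteq> 0\<close>
    by (auto simp: path_image_def path_def intro!: winding_number_constI)
next
  case (add x R)
  then have IH: "path (\<lambda>t. c * (\<Prod>k\<in>#R. \<gamma> t - k))"
     "0 \<notin> path_image (\<lambda>t. c * (\<Prod>k\<in>#R. \<gamma> t - k))"
     "winding_number (\<lambda>t. c * (\<Prod>k\<in>#R. \<gamma> t - k)) 0 = (\<Sum>k\<in>#R. winding_number \<gamma> k)"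
    by auto
  have x: "x \<notin> path_image \<gamma>" using add by auto
  have pB: "path (\<lambda>t. \<gamma> t - x)" using p unfolding path_def by (intro continuous_intros)
  have nB: "0 \<notin> path_image (\<lambda>t. \<gamma> t - x)" using x by (auto simp: path_image_def)
  have eq: "(\<lambda>t. c * (\<Prod>k\<in>#add_mset x R. \<gamma> t - k)) = (\<lambda>t. (c * (\<Prod>k\<in>#R. \<gamma> t - k)) * (\<gamma> t - x))"
    by (auto simp: mult_ac)
  have "path (\<lambda>t. (c * (\<Prod>k\<in>#R. \<gamma> t - k)) * (\<gamma> t - x))"
    using IH(1) pB unfolding path_def by (rule continuous_on_mult)
  moreover have "0 \<notin> path_image (\<lambda>t. (c * (\<Prod>k\<in>#R. \<gamma> t - k)) * (\<gamma> t - x))"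
  proof
    assume "0 \<in> path_image (\<lambda>t. (c * (\<Prod>k\<in>#R. \<gamma> t - k)) * (\<gamma> t - x))"
    then obtain t where t: "t \<in> {0..1}" "(c * (\<Prod>k\<in>#R. \<gamma> t - k)) * (\<gamma> t - x) = 0"
      by (auto simp: path_image_def)
    then have "c * (\<Prod>k\<in>#R. \<gamma> t - k) = 0 \<or> \<gamma> t - x = 0" by simp
    then show False using IH(2) nB t(1) unfolding path_image_def image_iff by (metis (no_types, lifting))
  qed
  moreover have "winding_number (\<lambda>t. (c * (\<Prod>k\<in>#R. \<gamma> t - k)) * (\<gamma> t - x)) 0
      = (\<Sum>k\<in>#R. winding_number \<gamma> k) + winding_number \<gamma> x"
    apply (subst wn_mult[OF IH(1) pB _ _ IH(2) nB])
    using c apply (auto simp: pathfinish_def pathstart_def)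
    by (metis IH(3) winding_number_offset)
  ultimately show ?case unfolding eq by (simp add: add.commute)
qed

lemma wn_poly:
  fixes \<gamma> :: "real \<Rightarrow> complex" and Q :: "complex poly"
  assumes p: "path \<gamma>" and c: "pathfinish \<gamma> = pathstart \<gamma>" and Q: "Q \<noteq> 0"
    and nz: "\<forall>t\<in>{0..1}. poly Q (\<gamma> t) \<noteq> 0"
  shows "winding_number (\<lambda>t. poly Q (\<gamma> t)) 0 = (\<Sum>k\<in>#proots Q. winding_number \<gamma> k)"
proof -
  have dec: "poly Q z = lead_coeff Q * (\<Prod>k\<in>#proots Q. z - k)" for z
  proof -
    have "poly Q z = poly (smult (lead_coeff Q) (\<Prod>x\<in>#proots Q. [:-x, 1:])) z"
      by (simp add: complex_poly_decompose_multiset)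
    also have "\<dots> = lead_coeff Q * (\<Prod>k\<in>#proots Q. z - k)"
      by (simp add: poly_prod_mset multiset.map_comp o_def)
    finally show ?thesis .
  qed
  have "\<forall>k\<in>#proots Q. k \<notin> path_image \<gamma>"
    using nz Q by (auto simp: path_image_def)
  from wn_prod_mset[OF p c _ this] Q show ?thesis by (simp add: dec)
qed



lemma geom:
  fixes K :: "complex set" and z :: complex
  assumes cK: "convex K" and oK: "open K" and bK: "bounded K" and nK: "K \<noteq> {}"
    and s: "s = infdist z K" and sp: "s > 0"
  obtains u where "norm u = 1"
    "\<And>a. a \<in> K \<Longrightarrow> inner u (z - a) > s \<and>
         (norm (z - a))\<^sup>2 \<le> (diameter K)\<^sup>2 - s\<^sup>2 + 2 * s * inner u (z - a)"
proof -
  define Kc where "Kc = closure K"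
  have Kc: "closed Kc" "Kc \<noteq> {}" "convex Kc" "bounded Kc" "K \<subseteq> Kc"
    using cK bK nK by (auto simp: Kc_def convex_closure bounded_closure closure_subset)
  have sKc: "infdist z Kc = s"
    by (simp add: s Kc_def infdist_eq_setdist)
  obtain w where w: "w \<in> Kc" "infdist z Kc = dist z w"
    using infdist_attains_inf[OF Kc(1,2)] by blast
  have wmin: "\<forall>y\<in>Kc. dist z w \<le> dist z y"
    using w infdist_le by metis
  have nzw: "norm (z - w) = s" using w sKc by (simp add: dist_norm)
  define u where "u = (1/s) *\<^sub>R (z - w)"
  have nu: "norm u = 1" using nzw sp by (simp add: u_def)
  have izu: "inner (z - w) u = s"
    using nzw sp by (simp add: u_def power2_norm_eq_inner[symmetric] power2_eq_square)
  have Dc: "diameter Kc = diameter K" by (simp add: Kc_def diameter_closure bK)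
  show ?thesis
  proof (rule that[OF nu])
    fix a assume a: "a \<in> K"
    obtain e where e: "e > 0" "ball a e \<subseteq> K" using oK a open_contains_ball by blast
    have "a + (e/2) *\<^sub>R u \<in> ball a e" using e nu by (simp add: dist_norm)
    then have a'K: "a + (e/2) *\<^sub>R u \<in> Kc" using e Kc(5) by blast
    have "inner (z - w) (a + (e/2) *\<^sub>R u - w) \<le> 0"
      by (rule any_closest_point_dot[OF Kc(3,1) w(1) a'K wmin])
    moreover have "inner (z - w) (a + (e/2) *\<^sub>R u - w) = inner (z - w) (a - w) + (e/2) * inner (z - w) u"
      by (simp add: inner_diff_right inner_add_right)
    ultimately have "inner (z - w) (a - w) + (e/2) * s \<le> 0"
      using izu by simp
    then have neg: "inner (z - w) (a - w) < 0" using e sp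
    proof -
      have "(e/2) * s > 0" using e sp by simp
      then show ?thesis using \<open>inner (z - w) (a - w) + (e/2) * s \<le> 0\<close> by linarith
    qed
    have x: "inner u (z - a) = s - inner (z - w) (a - w) / s"
    proof -
      have "inner u (z - a) = inner u (z - w) - inner u (a - w)"
        by (simp add: inner_diff_right)
      also have "\<dots> = s - inner (z - w) (a - w) / s"
        using izu by (simp add: u_def inner_commute divide_inverse mult.commute)
      finally show ?thesis .
    qed
    have "inner (z - w) (a - w) / s < 0" using neg sp by (simp add: divide_neg_pos)
    then have g1: "inner u (z - a) > s" using x by simp
    have aw: "norm (a - w) \<le> diameter K"
    proof -
      have "a \<in> Kc" using Kc(5) a by blast
      then show ?thesis using diameter_bounded_bound[OF Kc(4) _ w(1), of a] Dc by (simp add: dist_norm norm_minus_commute)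
    qed
    have "(norm (z - a))\<^sup>2 = (norm ((z - w) - (a - w)))\<^sup>2" by simp
    also have "\<dots> = s\<^sup>2 - 2 * inner (z - w) (a - w) + (norm (a - w))\<^sup>2"
      using dot_norm_neg[of "z - w" "a - w"] nzw by simp
    also have "inner (z - w) (a - w) = s\<^sup>2 - s * inner u (z - a)"
    proof -
      have "s * inner u (z - a) = s * s - s * (inner (z - w) (a - w) / s)"
        using x by (simp add: right_diff_distrib)
      also have "s * (inner (z - w) (a - w) / s) = inner (z - w) (a - w)" using sp by simp
      finally show ?thesis by (simp add: power2_eq_square)
    qed
    finally have "(norm (z - a))\<^sup>2 = - s\<^sup>2 + 2 * s * inner u (z - a) + (norm (a - w))\<^sup>2"
      by simp
    moreover have "(norm (a - w))\<^sup>2 \<le> (diameter K)\<^sup>2"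
      using aw by (simp add: power_mono)
    ultimately show "inner u (z - a) > s \<and>
         (norm (z - a))\<^sup>2 \<le> (diameter K)\<^sup>2 - s\<^sup>2 + 2 * s * inner u (z - a)"
      using g1 by simp
  qed
qed



lemma contour:
  fixes K :: "complex set" and r :: real
  assumes cK: "convex K" and bK: "bounded K" and nK: "K \<noteq> {}" and rp: "r > 0"
  obtains \<gamma> where "path \<gamma>" "pathfinish \<gamma> = pathstart \<gamma>"
    "\<And>t. t \<in> {0..1} \<Longrightarrow> infdist (\<gamma> t) K = r"
    "\<And>z. infdist z K < r \<Longrightarrow> winding_number \<gamma> z = 1"
    "\<And>z. infdist z K > r \<Longrightarrow> winding_number \<gamma> z = 0"
proof -
  define Kc where "Kc = closure K"
  have Kc: "closed Kc" "Kc \<noteq> {}" "convex Kc" "bounded Kc" "K \<subseteq> Kc"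
    using cK bK nK by (auto simp: Kc_def convex_closure bounded_closure closure_subset)
  have idc: "infdist x Kc = infdist x K" for x
    by (simp add: Kc_def infdist_eq_setdist)
  have att: "\<exists>w\<in>Kc. infdist x K = dist x w" for x
    using infdist_attains_inf[OF Kc(1,2), of x] idc by metis
  define S where "S = {z. infdist z K \<le> r}"
  have clS: "closed S" unfolding S_def
    by (rule closed_Collect_le) (auto intro!: continuous_intros)
  obtain k where k: "k \<in> K" using nK by blast
  have neS: "S \<noteq> {}" using k rp by (auto simp: S_def intro!: exI[of _ k])
  have cvS: "convex S"
  proof (rule convexI)
    fix x y :: complex and u v :: real
    assume xy: "x \<in> S" "y \<in> S" and uv: "0 \<le> u" "0 \<le> v" "u + v = 1"
    obtain wx where wx: "wx \<in> Kc" "infdist x K = dist x wx" using att by blast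
    obtain wy where wy: "wy \<in> Kc" "infdist y K = dist y wy" using att by blast
    have wK: "u *\<^sub>R wx + v *\<^sub>R wy \<in> Kc" using Kc(3) wx(1) wy(1) uv by (simp add: convexD)
    have "infdist (u *\<^sub>R x + v *\<^sub>R y) K = infdist (u *\<^sub>R x + v *\<^sub>R y) Kc" by (simp add: idc)
    also have "\<dots> \<le> dist (u *\<^sub>R x + v *\<^sub>R y) (u *\<^sub>R wx + v *\<^sub>R wy)" by (rule infdist_le[OF wK])
    also have "\<dots> = norm (u *\<^sub>R (x - wx) + v *\<^sub>R (y - wy))"
      by (simp add: dist_norm algebra_simps)
    also have "\<dots> \<le> u * norm (x - wx) + v * norm (y - wy)"
      using uv by (metis (no_types, opaque_lifting) abs_of_nonneg norm_scaleR norm_triangle_ineq)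
    also have "\<dots> \<le> u * r + v * r"
      using xy wx wy uv by (intro add_mono mult_left_mono) (auto simp: S_def dist_norm)
    also have "\<dots> = r" using uv by (simp add: distrib_right[symmetric])
    finally show "u *\<^sub>R x + v *\<^sub>R y \<in> S" by (simp add: S_def)
  qed
  obtain B where B: "\<forall>x\<in>Kc. norm x \<le> B" using Kc(4) bounded_iff by blast
  define R where "R = B + r + 1"
  have SR: "norm z < R" if "z \<in> S" for z
  proof -
    obtain w where w: "w \<in> Kc" "infdist z K = dist z w" using att by blast
    have "norm z \<le> norm w + norm (z - w)" by (metis add.commute diff_add_cancel norm_triangle_ineq)
    also have "\<dots> \<le> B + r" using B w that by (intro add_mono) (auto simp: S_def dist_norm)
    finally show ?thesis by (simp add: R_def)
  qed
  have Rp: "R > 0" using SR[of k] k rp by (simp add: S_def) (smt (verit) norm_ge_zero)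
  define C where "C = circlepath 0 R"
  define \<gamma> where "\<gamma> = closest_point S \<circ> C"
  have pC: "path C" "pathfinish C = pathstart C" by (simp_all add: C_def)
  have CnS: "C t \<notin> S" "norm (C t) = R" if "t \<in> {0..1}" for t
  proof -
    have "C t \<in> path_image C" using that by (simp add: path_image_def)
    then show "norm (C t) = R" using Rp by (simp add: C_def)
    then show "C t \<notin> S" using SR by fastforce
  qed
  have pg: "path \<gamma>" unfolding \<gamma>_def
    by (rule path_continuous_image[OF pC(1) continuous_on_closest_point[OF cvS clS neS]])
  have cg: "pathfinish \<gamma> = pathstart \<gamma>" using pC(2)
    by (simp add: \<gamma>_def pathfinish_compose pathstart_compose)
  have gS: "\<gamma> t \<in> S" for t unfolding \<gamma>_def by (simp add: closest_point_in_set[OF clS neS])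
  have G2: "infdist (\<gamma> t) K = r" if t: "t \<in> {0..1}" for t
  proof (rule ccontr)
    assume ne: "infdist (\<gamma> t) K \<noteq> r"
    define x where "x = C t"
    define y where "y = \<gamma> t"
    have yl: "infdist y K < r" using ne gS[of t] by (simp add: y_def S_def)
    have xy: "x \<noteq> y" using CnS[OF t] gS[of t] by (auto simp: x_def y_def)
    define d where "d = norm (x - y)"
    have dp: "d > 0" using xy by (simp add: d_def)
    define l where "l = min 1 ((r - infdist y K) / d)"
    have lp: "l > 0" "l \<le> 1" "l * d \<le> r - infdist y K"
      using dp yl by (auto simp: l_def min_def field_simps)
    define y' where "y' = y + l *\<^sub>R (x - y)"
    have "infdist y' K \<le> infdist y K + dist y' y" by (rule infdist_triangle)
    also have "dist y' y = l * d" using lp by (simp add: y'_def d_def dist_norm)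
    finally have "y' \<in> S" using lp by (simp add: S_def)
    then have "dist x y \<le> dist x y'"
      using closest_point_le[OF clS, of y' x] by (simp add: y_def x_def \<gamma>_def)
    moreover have "dist x y' = (1 - l) * d"
    proof -
      have "x - y' = (1 - l) *\<^sub>R (x - y)" by (simp add: y'_def algebra_simps)
      then show ?thesis using lp by (simp add: dist_norm d_def)
    qed
    ultimately show False using lp dp by (simp add: dist_norm d_def)
  qed
  have imS: "path_image \<gamma> \<subseteq> S" using gS by (auto simp: path_image_def)
  show ?thesis
  proof (rule that[OF pg cg G2])
    fix z assume z: "infdist z K > r"
    then have "z \<notin> S" by (simp add: S_def)
    then show "winding_number \<gamma> z = 0"
      by (rule winding_number_zero_outside[OF pg cvS cg _ imS])
  next
    fix z assume z: "infdist z K < r"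
    define e where "e = r - infdist z K"
    have ep: "e > 0" using z by (simp add: e_def)
    have zS: "z \<in> S" using z by (simp add: S_def)
    have ballS: "y \<in> S" if "dist y z < e" for y
      using infdist_triangle[of y K z] that by (simp add: S_def e_def)
    have "winding_number \<gamma> z = winding_number C z"
    proof (rule winding_number_nearby_loops_eq[OF pC(1) pg pC(2) cg])
      fix t :: real assume t: "t \<in> {0..1}"
      define x where "x = C t"
      have xz: "norm (x - z) \<ge> e"
        using ballS[of x] CnS(1)[OF t] by (force simp: x_def dist_norm)
      define y' where "y' = z + ((e/2) / norm (x - z)) *\<^sub>R (x - z)"
      have xnz: "x \<noteq> z" using xz ep by auto
      have "dist y' z = e/2" using xnz ep by (simp add: y'_def dist_norm)
      then have y'S: "y' \<in> S" using ep ballS by simp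
      have "x - y' = (1 - (e/2) / norm (x - z)) *\<^sub>R (x - z)" by (simp add: y'_def algebra_simps)
      moreover have c0: "0 \<le> 1 - (e/2) / norm (x - z)"
      proof -
        have "(e/2) / norm (x - z) \<le> 1" using xz ep by (simp add: divide_le_eq)
        then show ?thesis by simp
      qed
      ultimately have "norm (x - y') = (1 - (e/2) / norm (x - z)) * norm (x - z)"
        by (simp only: norm_scaleR abs_of_nonneg[OF c0])
      also have "\<dots> = norm (x - z) - e/2" using xz ep xnz by (simp add: field_simps)
      finally have "norm (x - y') < norm (x - z)" using ep by simp
      moreover have "dist x (closest_point S x) \<le> dist x y'" by (rule closest_point_le[OF clS y'S])
      ultimately show "norm (\<gamma> t - C t) < norm (C t - z)"
        by (simp add: \<gamma>_def x_def dist_norm norm_minus_commute)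
    qed
    also have "\<dots> = 1" unfolding C_def
      by (rule winding_number_circlepath) (use SR[OF zS] in simp)
    finally show "winding_number \<gamma> z = 1" .
  qed
qed



lemma numeric:
  fixes n m :: nat and D \<delta> r :: real
  assumes n: "n \<ge> 1" and m: "m \<ge> 1" and D: "D > 0"
    and dl: "\<delta> \<ge> 2 * D * sqrt ((real m)\<^sup>2 / (real n)\<^sup>2 + real m / real n)"
    and r: "r = D * sqrt (real m / real (n + m))"
  shows "0 < r" "r < D" "r < \<delta>" "real m * (r\<^sup>2 + D\<^sup>2) \<le> real n * r * (\<delta> - r)"
proof -
  have q0: "0 < real m / real (n + m)" using n m by simp
  have q1: "real m / real (n + m) < 1" using n m by (simp add: field_simps)
  show r0: "0 < r" using q0 D r by simp
  have "sqrt (real m / real (n + m)) < 1" using q1 q0 by (metis real_sqrt_less_iff real_sqrt_one)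
  then show "r < D" using D r by (simp add: mult_strict_left_mono[of _ 1 D, simplified])
  have r2: "r\<^sup>2 = D\<^sup>2 * (real m / real (n + m))" using r q0 by (simp add: power_mult_distrib)
  have prod: "sqrt (real m / real (n + m)) * sqrt ((real m)\<^sup>2 / (real n)\<^sup>2 + real m / real n) = real m / real n"
  proof -
    have "real m / real (n + m) * ((real m)\<^sup>2 / (real n)\<^sup>2 + real m / real n) = (real m / real n)\<^sup>2"
    proof -
      have y: "real n > 0" using n by simp
      have xy: "real n + real m > 0" using n by simp
      have "(real m)\<^sup>2 / (real n)\<^sup>2 + real m / real n = real m * (real n + real m) / (real n)\<^sup>2"
        using y by (simp add: field_simps power2_eq_square)
      then show ?thesis using y xy by (simp add: power2_eq_square)
    qed
    then show ?thesis using n by (simp add: real_sqrt_mult[symmetric])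
  qed
  have "real n * r * \<delta> \<ge> real n * r * (2 * D * sqrt ((real m)\<^sup>2 / (real n)\<^sup>2 + real m / real n))"
    using dl r0 n by (intro mult_left_mono) auto
  also have "real n * r * (2 * D * sqrt ((real m)\<^sup>2 / (real n)\<^sup>2 + real m / real n))
     = 2 * D\<^sup>2 * real n * (sqrt (real m / real (n + m)) * sqrt ((real m)\<^sup>2 / (real n)\<^sup>2 + real m / real n))"
    by (simp add: r power2_eq_square algebra_simps)
  also have "\<dots> = 2 * D\<^sup>2 * real m" using prod n by simp
  finally have A: "real n * r * \<delta> \<ge> 2 * D\<^sup>2 * real m" .
  have B: "real (n + m) * r\<^sup>2 = D\<^sup>2 * real m" using r2 n by (simp add: field_simps)
  show key: "real m * (r\<^sup>2 + D\<^sup>2) \<le> real n * r * (\<delta> - r)"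
    using A B by (simp add: algebra_simps power2_eq_square)
  have "r\<^sup>2 + D\<^sup>2 > 0" using D by (simp add: add_nonneg_pos)
  then have "real m * (r\<^sup>2 + D\<^sup>2) > 0" using m by simp
  then have "real n * r * (\<delta> - r) > 0" using key by linarith
  moreover have "real n * r > 0" using r0 n by simp
  ultimately show "r < \<delta>" by (simp add: zero_less_mult_iff)
qed

lemma re_div_inner:
  fixes u v :: complex
  assumes "v \<noteq> 0"
  shows "Re (u / v) = inner u v / (norm v)\<^sup>2"
  using assms by (simp add: Re_divide inner_complex_def cmod_power2)

lemma logderiv:
  fixes A :: "nat set" and a :: "nat \<Rightarrow> complex"
  assumes "finite A" and "\<forall>i\<in>A. z \<noteq> a i"
  shows "poly (pderiv (\<Prod>i\<in>A. [:- a i, 1:])) z = (\<Prod>i\<in>A. (z - a i)) * (\<Sum>i\<in>A. 1 / (z - a i))"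
proof -
  have "poly (pderiv (\<Prod>i\<in>A. [:- a i, 1:])) z = (\<Sum>i\<in>A. \<Prod>j\<in>A - {i}. (z - a j))"
    by (simp add: pderiv_prod poly_sum poly_prod pderiv_pCons)
  also have "\<dots> = (\<Sum>i\<in>A. (\<Prod>j\<in>A. (z - a j)) * (1 / (z - a i)))"
  proof (rule sum.cong[OF refl])
    fix i assume i: "i \<in> A"
    have "(\<Prod>j\<in>A. (z - a j)) = (z - a i) * (\<Prod>j\<in>A - {i}. (z - a j))"
      using prod.remove[OF assms(1) i] by simp
    then show "(\<Prod>j\<in>A - {i}. (z - a j)) = (\<Prod>j\<in>A. (z - a j)) * (1 / (z - a i))"
      using assms(2) i by simp
  qed
  also have "\<dots> = (\<Prod>i\<in>A. (z - a i)) * (\<Sum>i\<in>A. 1 / (z - a i))"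
    by (simp add: sum_distrib_left)
  finally show ?thesis .
qed

lemma wsum_count:
  fixes \<gamma> :: "real \<Rightarrow> complex" and h :: "complex \<Rightarrow> real" and r :: real
  assumes "\<And>z. h z < r \<Longrightarrow> winding_number \<gamma> z = 1"
    "\<And>z. h z > r \<Longrightarrow> winding_number \<gamma> z = 0"
  shows "(\<forall>k\<in>#M. h k \<noteq> r) \<Longrightarrow> (\<Sum>k\<in>#M. winding_number \<gamma> k) = of_nat (size (filter_mset (\<lambda>k. h k < r) M))"
proof (induction M)
  case empty then show ?case by simp
next
  case (add x M)
  then have hx: "h x \<noteq> r" and IH: "(\<Sum>k\<in>#M. winding_number \<gamma> k) = of_nat (size (filter_mset (\<lambda>k. h k < r) M))"
    by auto
  show ?case
  proof (cases "h x < r")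
    case True then show ?thesis using IH assms(1)[OF True] by simp
  next
    case False then have "h x > r" using hx by simp
    then show ?thesis using IH assms(2) False by simp
  qed
qed

theorem theorem2:
  fixes K :: "complex set" and n m :: nat and p :: "complex poly" and a :: "nat \<Rightarrow> complex"
  assumes "convex K" and "open K" and "K \<noteq> {}" and "bounded K"
    and "n \<ge> 1" and "m \<ge> 1"
    and "degree p = n + m"
    and "p = smult (lead_coeff p) (\<Prod>i<n+m. [:- a i, 1:])"
    and "\<forall>i<n. a i \<in> K"
    and "\<forall>i. n \<le> i \<and> i < n + m \<longrightarrow> a i \<notin> K"
    and "(MIN i\<in>{n..<n+m}. infdist (a i) K)
           \<ge> 2 * diameter K * sqrt ((real m)\<^sup>2 / (real n)\<^sup>2 + real m / real n)"
  shows "\<exists>b :: nat \<Rightarrow> complex.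
           pderiv p = smult (lead_coeff (pderiv p)) (\<Prod>i<n+m-1. [:- b i, 1:])
         \<and> (\<forall>i<n-1. infdist (b i) K \<le> diameter K * sqrt (real m) / sqrt (real (m + n)))
         \<and> (\<forall>i. n - 1 \<le> i \<and> i < n + m - 1 \<longrightarrow>
                infdist (b i) K \<ge> diameter K * sqrt (real m / real (n + m)))"
proof -
  note cK = assms(1) and oK = assms(2) and nK = assms(3) and bK = assms(4)
    and n1 = assms(5) and m1 = assms(6) and degp = assms(7) and pdec = assms(8)
    and nearK = assms(9) and minh = assms(11)
  define D where "D = diameter K"
  define r where "r = D * sqrt (real m / real (n + m))"
  define \<delta> where "\<delta> = (MIN i\<in>{n..<n+m}. infdist (a i) K)"
  have Dp: "D > 0"
  proof -
    obtain k where k: "k \<in> K" using nK by blast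
    obtain e where e: "e > 0" "ball k e \<subseteq> K" using oK k open_contains_ball by blast
    have "k + of_real (e/2) \<in> K" using e by (intro subsetD[OF e(2)]) (simp add: dist_norm)
    then have "dist k (k + of_real (e/2)) \<le> D"
      unfolding D_def by (rule diameter_bounded_bound[OF bK k])
    then show ?thesis using e by (simp add: dist_norm)
  qed
  have dl: "\<delta> \<ge> 2 * D * sqrt ((real m)\<^sup>2 / (real n)\<^sup>2 + real m / real n)"
    using minh by (simp add: \<delta>_def D_def)
  note num = numeric[OF n1 m1 Dp dl r_def]
  have r0: "r > 0" and rD: "r < D" and rd: "r < \<delta>"
    and keyn: "real m * (r\<^sup>2 + D\<^sup>2) \<le> real n * r * (\<delta> - r)" using num by auto
  define J where "J = {n..<n+m}"
  have far: "infdist (a j) K \<ge> \<delta>" if "j \<in> J" for j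
    unfolding \<delta>_def using that by (auto simp: J_def intro!: Min_le)
  define f where "f = (\<Prod>i<n. [:- a i, 1:])"
  define g where "g = (\<Prod>i\<in>J. [:- a i, 1:])"
  define c where "c = lead_coeff p"
  have pfg: "p = smult c (f * g)"
  proof -
    have U: "{..<n+m} = {..<n} \<union> J" by (auto simp: J_def)
    have X: "(\<Prod>i<n+m. [:- a i, 1:]) = f * g"
    proof -
      have "(\<Prod>i<n+m. [:- a i, 1:]) = (\<Prod>i\<in>{..<n} \<union> J. [:- a i, 1:])" by (simp only: U)
      also have "\<dots> = (\<Prod>i<n. [:- a i, 1:]) * (\<Prod>i\<in>J. [:- a i, 1:])"
        by (rule prod.union_disjoint) (auto simp: J_def)
      finally show ?thesis by (simp only: f_def g_def)
    qed
    show ?thesis unfolding c_def by (metis pdec X)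
  qed
  have p0: "p \<noteq> 0" using degp n1 by auto
  have c0: "c \<noteq> 0" using p0 by (simp add: c_def)
  have f0: "f \<noteq> 0" unfolding f_def by (auto simp: prod_zero_iff)
  have g0: "g \<noteq> 0" unfolding g_def by (auto simp: prod_zero_iff J_def)
  have degf: "degree f = n" unfolding f_def by (subst degree_prod_sum_eq) auto
  have degg: "degree g = m" unfolding g_def by (subst degree_prod_sum_eq) (auto simp: J_def)
  define Q1 where "Q1 = pderiv f * g + f * pderiv g"
  define P0 where "P0 = pderiv f * g"
  have pdp: "pderiv p = smult c Q1"
    by (simp add: pfg pderiv_smult pderiv_mult Q1_def algebra_simps)
  have degfg: "degree (f * g) = n + m" using f0 g0 degf degg by (simp add: degree_mult_eq)
  have degQ1: "degree Q1 = n + m - 1"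
  proof -
    have "Q1 = pderiv (f * g)" by (simp add: Q1_def pderiv_mult algebra_simps)
    then show ?thesis using degfg by (simp add: degree_pderiv)
  qed
  have Q10: "Q1 \<noteq> 0"
  proof
    assume "Q1 = 0" then have "degree Q1 = 0" by simp
    then show False using degQ1 n1 m1 by simp
  qed
  have fd0: "pderiv f \<noteq> 0"
  proof (cases "n = 1")
    case True
    then have "f = [:- a 0, 1:]" by (simp add: f_def)
    then show ?thesis by (simp add: pderiv_pCons)
  next
    case False then show ?thesis using n1 degf by (simp add: pderiv_eq_0_iff)
  qed
  have P00: "P0 \<noteq> 0" using fd0 g0 by (simp add: P0_def)
  have degfd: "degree (pderiv f) = n - 1" using degf by (simp add: degree_pderiv)
  have polyf: "poly f z = (\<Prod>i<n. (z - a i))" for z by (simp add: f_def poly_prod)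
  have polyg: "poly g z = (\<Prod>i\<in>J. (z - a i))" for z by (simp add: g_def poly_prod)
  have polyfd: "poly (pderiv f) z = (\<Prod>i<n. (z - a i)) * (\<Sum>i<n. 1 / (z - a i))"
    if "\<forall>i<n. z \<noteq> a i" for z unfolding f_def by (rule logderiv) (use that in auto)
  have polygd: "poly (pderiv g) z = (\<Prod>i\<in>J. (z - a i)) * (\<Sum>i\<in>J. 1 / (z - a i))"
    if "\<forall>i\<in>J. z \<noteq> a i" for z unfolding g_def by (rule logderiv) (use that in \<open>auto simp: J_def\<close>)
  have fpos: "poly f z \<noteq> 0" if "\<forall>i<n. z \<noteq> a i" for z using that by (simp add: polyf)
  have GL: "poly (pderiv f) z \<noteq> 0" if zK: "infdist z K > 0" for z
  proof -
    obtain u where nu: "norm u = 1" and uK: "\<And>a. a \<in> K \<Longrightarrow> inner u (z - a) > infdist z K \<and>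
         (norm (z - a))\<^sup>2 \<le> (diameter K)\<^sup>2 - (infdist z K)\<^sup>2 + 2 * infdist z K * inner u (z - a)"
      using geom[OF cK oK bK nK refl zK] by blast
    have zne: "\<forall>i<n. z \<noteq> a i"
    proof (intro allI impI)
      fix i assume "i < n"
      then have "inner u (z - a i) > infdist z K" using uK nearK by blast
      then show "z \<noteq> a i" using zK by auto
    qed
    have tpos: "Re (u * (1 / (z - a i))) > 0" if i: "i < n" for i
    proof -
      have "inner u (z - a i) > infdist z K" using uK nearK i by blast
      moreover have "z - a i \<noteq> 0" using zne i by simp
      ultimately show ?thesis using zK by (simp add: re_div_inner)
    qed
    have "Re (u * (\<Sum>i<n. 1 / (z - a i))) = (\<Sum>i<n. Re (u * (1 / (z - a i))))"
      by (simp add: sum_distrib_left)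
    also have "\<dots> > 0" using n1 tpos by (intro sum_pos) (auto simp: lessThan_empty_iff)
    finally have R: "Re (u * (\<Sum>i<n. 1 / (z - a i))) > 0" .
    have "(\<Sum>i<n. 1 / (z - a i)) \<noteq> 0"
    proof
      assume S0: "(\<Sum>i<n. 1 / (z - a i)) = 0"
      have "Re (u * (\<Sum>i<n. 1 / (z - a i))) = 0" by (simp only: S0 mult_zero_right zero_complex.simps)
      then show False using R by linarith
    qed
    then show ?thesis using zne fpos[OF zne] by (simp add: polyfd polyf)
  qed
  have K1: "norm (poly f z * poly (pderiv g) z) < norm (poly (pderiv f) z * poly g z)"
    if zr: "infdist z K = r" for z
  proof -
    have zK: "infdist z K > 0" using zr r0 by simp
    obtain u where nu: "norm u = 1" and uK: "\<And>a. a \<in> K \<Longrightarrow> inner u (z - a) > r \<and>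
         (norm (z - a))\<^sup>2 \<le> D\<^sup>2 - r\<^sup>2 + 2 * r * inner u (z - a)"
      using geom[OF cK oK bK nK refl zK] zr D_def by metis
    have zne: "\<forall>i<n. z \<noteq> a i"
    proof (intro allI impI)
      fix i assume "i < n"
      then have "inner u (z - a i) > r" using uK nearK by blast
      then show "z \<noteq> a i" using r0 by auto
    qed
    have tlow: "Re (u * (1 / (z - a i))) > r / (r\<^sup>2 + D\<^sup>2)" if i: "i < n" for i
    proof -
      define x where "x = inner u (z - a i)"
      define N where "N = (norm (z - a i))\<^sup>2"
      have x: "x > r" and N: "N \<le> D\<^sup>2 - r\<^sup>2 + 2 * r * x" using uK nearK i by (auto simp: x_def N_def)
      have v0: "z - a i \<noteq> 0" using zne i by simp
      have Np: "N > 0" using v0 by (simp add: N_def)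
      have re: "Re (u * (1 / (z - a i))) = x / N" using v0 by (simp add: re_div_inner x_def N_def)
      have Dr: "D\<^sup>2 - r\<^sup>2 > 0" using rD r0 by (simp add: power_strict_mono)
      have "(x - r) * (D\<^sup>2 - r\<^sup>2) > 0" using x Dr by simp
      moreover have "x * (r\<^sup>2 + D\<^sup>2) - r * (D\<^sup>2 - r\<^sup>2 + 2 * r * x) = (x - r) * (D\<^sup>2 - r\<^sup>2)"
        by (simp add: algebra_simps power2_eq_square)
      moreover have "r * N \<le> r * (D\<^sup>2 - r\<^sup>2 + 2 * r * x)" using N r0 by simp
      ultimately have lt: "r * N < x * (r\<^sup>2 + D\<^sup>2)" by linarith
      have RD: "r\<^sup>2 + D\<^sup>2 > 0" using Dp by (simp add: add_nonneg_pos)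
      have "r / (r\<^sup>2 + D\<^sup>2) < x / N" using lt RD Np by (simp add: divide_less_eq less_divide_eq frac_less_eq)
      then show ?thesis using re by simp
    qed
    have "real n * (r / (r\<^sup>2 + D\<^sup>2)) = (\<Sum>i<n. r / (r\<^sup>2 + D\<^sup>2))" by simp
    also have "\<dots> < (\<Sum>i<n. Re (u * (1 / (z - a i))))"
      using n1 tlow by (intro sum_strict_mono) (auto simp: lessThan_empty_iff)
    also have "\<dots> = Re (u * (\<Sum>i<n. 1 / (z - a i)))" by (simp add: sum_distrib_left)
    also have "\<dots> \<le> norm (u * (\<Sum>i<n. 1 / (z - a i)))" by (rule complex_Re_le_cmod)
    also have "\<dots> = norm (\<Sum>i<n. 1 / (z - a i))" using nu by (simp add: norm_mult)
    finally have Sn: "norm (\<Sum>i<n. 1 / (z - a i)) > real n * (r / (r\<^sup>2 + D\<^sup>2))" .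
    have dj: "norm (z - a j) \<ge> \<delta> - r" if j: "j \<in> J" for j
    proof -
      have "infdist (a j) K \<le> infdist z K + dist (a j) z" by (rule infdist_triangle)
      then show ?thesis using far[OF j] zr by (simp add: dist_norm norm_minus_commute)
    qed
    have zneJ: "\<forall>j\<in>J. z \<noteq> a j" using dj rd by force
    have "norm (\<Sum>j\<in>J. 1 / (z - a j)) \<le> (\<Sum>j\<in>J. norm (1 / (z - a j)))" by (rule norm_sum)
    also have "\<dots> \<le> (\<Sum>j\<in>J. 1 / (\<delta> - r))"
    proof (rule sum_mono)
      fix j assume j: "j \<in> J"
      show "norm (1 / (z - a j)) \<le> 1 / (\<delta> - r)"
        using dj[OF j] rd by (simp add: norm_divide frac_le)
    qed
    also have "\<dots> = real m / (\<delta> - r)" by (simp add: J_def)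
    also have "\<dots> \<le> real n * (r / (r\<^sup>2 + D\<^sup>2))"
    proof -
      have RD: "r\<^sup>2 + D\<^sup>2 > 0" using Dp by (simp add: add_nonneg_pos)
      have dr: "\<delta> - r > 0" using rd by simp
      show ?thesis using keyn RD dr by (simp add: field_simps)
    qed
    finally have Sm: "norm (\<Sum>j\<in>J. 1 / (z - a j)) < norm (\<Sum>i<n. 1 / (z - a i))" using Sn by linarith
    have Fp: "norm (\<Prod>i<n. (z - a i)) > 0" using zne by simp
    have Gp: "norm (\<Prod>i\<in>J. (z - a i)) > 0" using zneJ by (simp add: J_def)
    have "norm (poly f z * poly (pderiv g) z) = norm (\<Prod>i<n. (z - a i)) * norm (\<Prod>i\<in>J. (z - a i)) * norm (\<Sum>j\<in>J. 1 / (z - a j))"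
      using zneJ by (simp add: polyf polygd norm_mult)
    also have "\<dots> < norm (\<Prod>i<n. (z - a i)) * norm (\<Prod>i\<in>J. (z - a i)) * norm (\<Sum>i<n. 1 / (z - a i))"
      using Sm Fp Gp by simp
    also have "\<dots> = norm (poly (pderiv f) z * poly g z)"
      using zne by (simp add: polyfd polyg norm_mult)
    finally show ?thesis .
  qed
  obtain \<gamma> where pg: "path \<gamma>" and cg: "pathfinish \<gamma> = pathstart \<gamma>"
    and gr: "\<And>t. t \<in> {0..1} \<Longrightarrow> infdist (\<gamma> t) K = r"
    and w1: "\<And>z. infdist z K < r \<Longrightarrow> winding_number \<gamma> z = 1"
    and w0: "\<And>z. infdist z K > r \<Longrightarrow> winding_number \<gamma> z = 0"
    using contour[OF cK bK nK r0] by blast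
  have polyQ1: "poly Q1 z = poly (pderiv f) z * poly g z + poly f z * poly (pderiv g) z" for z
    by (simp add: Q1_def)
  have polyP0: "poly P0 z = poly (pderiv f) z * poly g z" for z
    by (simp add: P0_def)
  have Q1nz: "poly Q1 z \<noteq> 0" if "infdist z K = r" for z
  proof
    assume "poly Q1 z = 0"
    then have "poly (pderiv f) z * poly g z = - (poly f z * poly (pderiv g) z)"
      by (simp add: polyQ1 add_eq_0_iff)
    then have "norm (poly (pderiv f) z * poly g z) = norm (poly f z * poly (pderiv g) z)"
      by simp
    then show False using K1[OF that] by simp
  qed
  have P0nz: "poly P0 z \<noteq> 0" if "infdist z K = r" for z
  proof
    assume "poly P0 z = 0"
    then have "norm (poly (pderiv f) z * poly g z) = 0" by (simp only: polyP0 norm_zero)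
    then show False using K1[OF that] norm_ge_zero[of "poly f z * poly (pderiv g) z"] by linarith
  qed
  have ppath: "path (\<lambda>t. poly P (\<gamma> t))" for P :: "complex poly"
    using pg unfolding path_def by (intro continuous_on_poly)
  have pclosed: "pathfinish (\<lambda>t. poly P (\<gamma> t)) = pathstart (\<lambda>t. poly P (\<gamma> t))" for P :: "complex poly"
    using cg by (simp add: pathfinish_def pathstart_def)
  have W: "winding_number (\<lambda>t. poly Q1 (\<gamma> t)) 0 = winding_number (\<lambda>t. poly P0 (\<gamma> t)) 0"
  proof (rule winding_number_nearby_loops_eq[OF ppath ppath pclosed pclosed])
    fix t :: real assume t: "t \<in> {0..1}"
    show "norm (poly Q1 (\<gamma> t) - poly P0 (\<gamma> t)) < norm (poly P0 (\<gamma> t) - 0)"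
      using K1[OF gr[OF t]] by (simp add: polyQ1 polyP0)
  qed
  have rootsQ1: "\<forall>k\<in>#proots Q1. infdist k K \<noteq> r" using Q1nz Q10 by auto
  have rootsP0: "\<forall>k\<in>#proots P0. infdist k K \<noteq> r" using P0nz P00 by auto
  have WQ1: "winding_number (\<lambda>t. poly Q1 (\<gamma> t)) 0 = of_nat (size (filter_mset (\<lambda>k. infdist k K < r) (proots Q1)))"
    using wn_poly[OF pg cg Q10] Q1nz gr wsum_count[of "\<lambda>z. infdist z K" r \<gamma>, OF w1 w0 rootsQ1] by simp
  have WP0: "winding_number (\<lambda>t. poly P0 (\<gamma> t)) 0 = of_nat (size (filter_mset (\<lambda>k. infdist k K < r) (proots P0)))"
    using wn_poly[OF pg cg P00] P0nz gr wsum_count[of "\<lambda>z. infdist z K" r \<gamma>, OF w1 w0 rootsP0] by simp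
  have cntP0: "size (filter_mset (\<lambda>k. infdist k K < r) (proots P0)) = n - 1"
  proof -
    have "proots P0 = proots (pderiv f) + proots g" using fd0 g0 by (simp add: P0_def proots_mult)
    moreover have "filter_mset (\<lambda>k. infdist k K < r) (proots g) = {#}"
    proof (subst filter_mset_eq_mempty_iff, intro allI impI)
      fix k assume "k \<in># proots g"
      then have "poly g k = 0" using g0 by simp
      then obtain j where j: "j \<in> J" "k = a j" by (auto simp: polyg J_def)
      show "\<not> infdist k K < r" using far[OF j(1)] j(2) rd by simp
    qed
    moreover have "filter_mset (\<lambda>k. infdist k K < r) (proots (pderiv f)) = proots (pderiv f)"
    proof -
      have "filter_mset (\<lambda>k. infdist k K < r) (proots (pderiv f)) = filter_mset (\<lambda>k. True) (proots (pderiv f))"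
      proof (rule filter_mset_cong[OF refl])
        fix k assume "k \<in># proots (pderiv f)"
        then have "poly (pderiv f) k = 0" using fd0 by simp
        then have "\<not> infdist k K > 0" using GL by blast
        then show "infdist k K < r \<longleftrightarrow> True" using r0 infdist_nonneg[of k K] by simp
      qed
      then show ?thesis by simp
    qed
    ultimately show ?thesis using degfd by (simp add: size_proots_complex)
  qed
  have cntQ1: "size (filter_mset (\<lambda>k. infdist k K < r) (proots Q1)) = n - 1"
    using W WQ1 WP0 cntP0 by (metis of_nat_eq_iff)
  define Q where "Q = pderiv p"
  have Q0: "Q \<noteq> 0" using c0 Q10 by (simp add: Q_def pdp)
  have rQ: "proots Q = proots Q1" using c0 by (simp add: Q_def pdp proots_smult)
  have degQ: "degree Q = n + m - 1" using c0 degQ1 by (simp add: Q_def pdp)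
  define N where "N = filter_mset (\<lambda>k. infdist k K < r) (proots Q)"
  define Fm where "Fm = filter_mset (\<lambda>k. \<not> infdist k K < r) (proots Q)"
  have NF: "proots Q = N + Fm" unfolding N_def Fm_def by (rule multiset_partition)
  have sN: "size N = n - 1" using cntQ1 rQ by (simp add: N_def)
  have sF: "size Fm = m"
  proof -
    have "size (proots Q) = n + m - 1" using degQ by (simp add: size_proots_complex)
    then show ?thesis using NF sN n1 by simp
  qed
  obtain xs where xs: "mset xs = N" using ex_mset by blast
  obtain ys where ys: "mset ys = Fm" using ex_mset by blast
  have lxs: "length xs = n - 1" using xs sN by (metis size_mset)
  have lys: "length ys = m" using ys sF by (metis size_mset)
  define b where "b = (\<lambda>i. (xs @ ys) ! i)"
  have lb: "length (xs @ ys) = n + m - 1" using lxs lys n1 by simp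
  have "Q = smult (lead_coeff Q) (\<Prod>x\<in>#proots Q. [:-x, 1:])"
    by (rule complex_poly_decompose_multiset[symmetric])
  also have "(\<Prod>x\<in>#proots Q. [:-x, 1:]) = (\<Prod>x\<leftarrow>xs @ ys. [:-x, 1:])"
  proof -
    have "proots Q = mset (xs @ ys)" using NF xs ys by simp
    then show ?thesis by (simp add: prod_mset_prod_list[symmetric])
  qed
  also have "\<dots> = (\<Prod>i<n+m-1. [:- b i, 1:])"
  proof -
    define zs where "zs = xs @ ys"
    have "(\<Prod>x\<leftarrow>zs. [:-x, 1:]) = (\<Prod>i<length zs. [:-zs ! i, 1:])"
      by (subst prod.list_conv_set_nth) (auto simp: atLeast0LessThan)
    then show ?thesis using lb by (simp add: zs_def b_def)
  qed
  finally have Qdec: "pderiv p = smult (lead_coeff (pderiv p)) (\<Prod>i<n+m-1. [:- b i, 1:])"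
    by (simp add: Q_def)
  have req: "diameter K * sqrt (real m) / sqrt (real (m + n)) = r"
    by (simp add: r_def D_def real_sqrt_divide add.commute)
  have near: "infdist (b i) K \<le> diameter K * sqrt (real m) / sqrt (real (m + n))" if i: "i < n - 1" for i
  proof -
    have "b i = xs ! i" using i lxs by (simp add: b_def nth_append)
    then have "b i \<in># N" using i lxs xs by (metis nth_mem set_mset_mset)
    then show ?thesis using req by (simp add: N_def)
  qed
  have farr: "infdist (b i) K \<ge> diameter K * sqrt (real m / real (n + m))"
    if i: "n - 1 \<le> i \<and> i < n + m - 1" for i
  proof -
    have "b i = ys ! (i - (n - 1))" using i lxs by (simp add: b_def nth_append)
    moreover have "i - (n - 1) < length ys" using i lys n1 by linarith
    ultimately have "b i \<in># Fm" using ys by (metis nth_mem set_mset_mset)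
    then show ?thesis by (simp add: Fm_def r_def D_def)
  qed
  show ?thesis using Qdec near farr by blast
qed

end
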